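(* In the standing setting, assume stochastic monotonicity (SM). Then for all $t\in\{1,\dots,\overline R\}$, all $k\in\{0,\dots,\sigma^v(t-1)\}$ and all $\delta\in\{0,\dots,N-1\}$, $$\varphi^v(t,k,\delta)\ge\varphi^v(t,k,\delta+1).$$
   Context: Standing setting. Integers $n\ge2$, $m\ge1$; $N:=(n-1)m$. Reals $p_{\mathrm{init}}\ge0$, $\Delta P>0$; the price at round $t\ge0$ is $p_t:=p_{\mathrm{init}}+t\Delta P$. The player's valuation $v:\{0,\dots,m\}\to[0,\infty)$ satisfies $v(0)=0$ and is non-decreasing and concave. $\overline R:=\lceil (v(1)-p_{\mathrm{init}})/\Delta P\rceil$, assumed $\ge1$. For $t\ge0$, $\sigma^v(t):=\min\operatorname{argmax}_{0\le u\le m}(v(u)-up_t)$. The opponent is given by random variables $Z_1\ge Z_2\ge\dots\ge Z_N\ge0$ (a.s.) on a probability space $(\Omega,\mathcal F,\mathbb P)$; its demand at price $p$ is $\delta(p):=\sum_{j=1}^N\mathbf 1\{Z_j>p\}$. For $t\ge1$ fix transition kernels $K_t(\delta'\mid\delta)$ ($\delta,\delta'\in\{0,\dots,N\}$), each $K_t(\cdot\mid\delta)$ a probability on $\{0,\dots,\delta\}$, with $K_t(\delta'\mid\delta)=\mathbb P(\delta(p_t)=\delta'\mid\delta(p_{t-1})=\delta)$ whenever $\mathbb P(\delta(p_{t-1})=\delta)>0$. Value function: for $t\in\{1,\dots,\overline R\}$, $k\in\{0,\dots,m\}$, $\delta\in\{0,\dots,N\}$: $\varphi^v(t,k,\delta):=v(k)-kp_{t-1}$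 if $k+\delta\le m$; $:=\max_{0\le u\le k}\sum_{\delta'=0}^N K_t(\delta'\mid\delta)\varphi^v(t+1,u,\delta')$ if $k+\delta>m$ and $t<\overline R$; $:=0$ if $k+\delta>m$ and $t=\overline R$. Stochastic monotonicity (SM): for every $t\in\{1,\dots,\overline R-1\}$, $s\in\{0,\dots,N\}$ and $\delta\in\{0,\dots,N-1\}$, $\sum_{\delta'\ge s}K_t(\delta'\mid\delta+1)\ge\sum_{\delta'\ge s}K_t(\delta'\mid\delta)$. *)

theory Defs
  imports "HOL-Probability.Probability"
begin

definition price :: "real \<Rightarrow> real \<Rightarrow> nat \<Rightarrow> real" where
  "price pinit dP t = pinit + real t * dP"

definition Rbar :: "(nat \<Rightarrow> real) \<Rightarrow> real \<Rightarrow> real \<Rightarrow> nat" where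
  "Rbar v pinit dP = nat \<lceil>(v 1 - pinit) / dP\<rceil>"

definition sigma :: "(nat \<Rightarrow> real) \<Rightarrow> nat \<Rightarrow> real \<Rightarrow> real \<Rightarrow> nat \<Rightarrow> nat" where
  "sigma v m pinit dP t =
     (LEAST u. u \<le> m \<and> (\<forall>w\<le>m. v w - real w * price pinit dP t \<le> v u - real u * price pinit dP t))"

definition demand :: "(nat \<Rightarrow> 'a \<Rightarrow> real) \<Rightarrow> nat \<Rightarrow> real \<Rightarrow> 'a \<Rightarrow> nat" where
  "demand Z N p \<omega> = card {j \<in> {1..N}. Z j \<omega> > p}"

text \<open>Value function, by backward recursion on r = R-bar - t (the number of remaining
  rounds after t).  K t d' d stands for K_t(d' | d).\<close>
primrec phi_aux :: "(nat \<Rightarrow> real) \<Rightarrow> nat \<Rightarrow> nat \<Rightarrow> real \<Rightarrow> real \<Rightarrow> (nat \<Rightarrow> nat \<Rightarrow> nat \<Rightarrow> real)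
    \<Rightarrow> nat \<Rightarrow> nat \<Rightarrow> nat \<Rightarrow> nat \<Rightarrow> real" where
  "phi_aux v m N pinit dP K 0 t k d =
     (if k + d \<le> m then v k - real k * price pinit dP (t - 1) else 0)"
| "phi_aux v m N pinit dP K (Suc r) t k d =
     (if k + d \<le> m then v k - real k * price pinit dP (t - 1)
      else Max ((\<lambda>u. \<Sum>d'\<in>{0..N}. K t d' d * phi_aux v m N pinit dP K r (t + 1) u d') ` {0..k}))"

definition phi :: "(nat \<Rightarrow> real) \<Rightarrow> nat \<Rightarrow> nat \<Rightarrow> real \<Rightarrow> real \<Rightarrow> (nat \<Rightarrow> nat \<Rightarrow> nat \<Rightarrow> real)
    \<Rightarrow> nat \<Rightarrow> nat \<Rightarrow> nat \<Rightarrow> real" where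
  "phi v m N pinit dP K t k d = phi_aux v m N pinit dP K (Rbar v pinit dP - t) t k d"

end

theory Submission
  imports Defs
begin



definition fv :: "(nat \<Rightarrow> real) \<Rightarrow> real \<Rightarrow> real \<Rightarrow> nat \<Rightarrow> nat \<Rightarrow> real" where
  "fv v pinit dP t u = v u - real u * price pinit dP t"

lemma price_mono: "dP > 0 \<Longrightarrow> t \<le> t' \<Longrightarrow> price pinit dP t \<le> price pinit dP t'"
  by (simp add: price_def mult_right_mono)

lemma sigma_prop:
  "sigma v m pinit dP t \<le> m \<and> (\<forall>w\<le>m. fv v pinit dP t w \<le> fv v pinit dP t (sigma v m pinit dP t))"
proof -
  let ?f = "fv v pinit dP t"
  let ?M = "Max (?f ` {0..m})"
  have "?M \<in> ?f ` {0..m}" by (intro Max_in) auto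
  then obtain u where u: "u \<le> m" "?f u = ?M" by (metis atLeastAtMost_iff imageE)
  have "\<forall>w\<le>m. ?f w \<le> ?f u" using u by (auto intro: Max_ge)
  hence ex: "\<exists>u. u \<le> m \<and> (\<forall>w\<le>m. ?f w \<le> ?f u)" using u by blast
  show ?thesis unfolding sigma_def using LeastI_ex[OF ex[unfolded fv_def]] by (simp add: fv_def)
qed

lemma sigma_mono:
  assumes "dP > 0"
  shows "sigma v m pinit dP (Suc t) \<le> sigma v m pinit dP t"
proof (rule ccontr)
  let ?a = "sigma v m pinit dP t" and ?b = "sigma v m pinit dP (Suc t)"
  assume "\<not> ?b \<le> ?a"
  hence ab: "?a < ?b" by simp
  have a: "?a \<le> m" "\<forall>w\<le>m. fv v pinit dP t w \<le> fv v pinit dP t ?a" using sigma_prop by blast+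
  have b: "?b \<le> m" "\<forall>w\<le>m. fv v pinit dP (Suc t) w \<le> fv v pinit dP (Suc t) ?b"
    using sigma_prop by blast+
  have 1: "fv v pinit dP (Suc t) ?a \<le> fv v pinit dP (Suc t) ?b" using b a by auto
  have 2: "fv v pinit dP t ?b \<le> fv v pinit dP t ?a" using a b by auto
  have "real ?a * dP < real ?b * dP" using ab assms by simp
  thus False using 1 2 by (simp add: fv_def price_def algebra_simps)
qed

lemma sigma_incr:
  assumes v_concave: "\<forall>u. 0 < u \<and> u < m \<longrightarrow> v (Suc u) - v u \<le> v u - v (u - 1)"
    and "a \<le> b" "b \<le> sigma v m pinit dP t"
  shows "fv v pinit dP t a \<le> fv v pinit dP t b"
proof -
  let ?s = "sigma v m pinit dP t" and ?f = "fv v pinit dP t" and ?p = "price pinit dP t"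
  have s: "?s \<le> m" "\<forall>w\<le>m. ?f w \<le> ?f ?s" using sigma_prop by blast+
  have step: "?f j \<le> ?f (Suc j)" if j: "j < ?s" for j
  proof (rule ccontr)
    assume neg: "\<not> ?f j \<le> ?f (Suc j)"
    hence D: "v (Suc j) - v j - ?p < 0" by (simp add: fv_def algebra_simps)
    have Dm: "v (Suc i) - v i \<le> v (Suc j) - v j" if "j \<le> i" "i < m" for i
      using that
    proof (induction i)
      case 0 thus ?case by simp
    next
      case (Suc i)
      show ?case
      proof (cases "j = Suc i")
        case True thus ?thesis by simp
      next
        case False
        hence "j \<le> i" using Suc by simp
        hence "v (Suc i) - v i \<le> v (Suc j) - v j" using Suc by simp
        moreover have "v (Suc (Suc i)) - v (Suc i) \<le> v (Suc i) - v i"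
          using v_concave[rule_format, of "Suc i"] Suc by simp
        ultimately show ?thesis by simp
      qed
    qed
    have dec: "?f i < ?f j" if "j < i" "i \<le> m" for i
      using that
    proof (induction i)
      case 0 thus ?case by simp
    next
      case (Suc i)
      have "v (Suc i) - v i \<le> v (Suc j) - v j" using Dm[of i] Suc by simp
      hence "?f (Suc i) < ?f i + 0" using D by (simp add: fv_def algebra_simps)
      moreover have "?f i \<le> ?f j" using Suc by (cases "j = i") auto
      ultimately show ?case by simp
    qed
    have "?f ?s < ?f j" using dec[of ?s] j s by simp
    moreover have "?f j \<le> ?f ?s" using s j by simp
    ultimately show False by simp
  qed
  show ?thesis using assms(2,3)
  proof (induction b)
    case 0 thus ?case by simp
  next
    case (Suc b)
    show ?case
    proof (cases "a = Suc b")
      case True thus ?thesis by simp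
    next
      case False
      hence "?f a \<le> ?f b" using Suc by simp
      also have "\<dots> \<le> ?f (Suc b)" using step Suc by simp
      finally show ?thesis .
    qed
  qed
qed

lemma K_total:
  fixes K :: "nat \<Rightarrow> nat \<Rightarrow> nat \<Rightarrow> real" and d :: nat
  assumes K_support: "\<forall>t\<ge>1. \<forall>d\<le>N. \<forall>d'. d' > d \<longrightarrow> K t d' d = 0"
    and K_sum: "\<forall>t\<ge>1. \<forall>d\<le>N. (\<Sum>d'\<in>{0..d}. K t d' d) = 1"
    and "t \<ge> 1" "d \<le> N"
  shows "(\<Sum>d'\<in>{0..N}. K t d' d) = (1::real)"
proof -
  have "{0..N} = {0..d} \<union> {Suc d..N}" using assms by auto
  hence "(\<Sum>d'\<in>{0..N}. K t d' d) = (\<Sum>d'\<in>{0..d}. K t d' d) + (\<Sum>d'\<in>{Suc d..N}. K t d' d)"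
    by (simp add: sum.union_disjoint)
  also have "(\<Sum>d'\<in>{Suc d..N}. K t d' d) = 0" using K_support assms by auto
  finally show ?thesis using K_sum assms by simp
qed

lemma abel:
  fixes h g :: "nat \<Rightarrow> real"
  shows "(\<Sum>i\<le>n. h i * g i) = (\<Sum>j\<le>n. h j) * g n + (\<Sum>i<n. (\<Sum>j\<le>i. h j) * (g i - g (Suc i)))"
  by (induction n) (simp_all add: algebra_simps)

lemma sm_sum:
  fixes K1 K0 g :: "nat \<Rightarrow> real"
  assumes tot: "(\<Sum>i\<in>{0..N}. K1 i) = (\<Sum>i\<in>{0..N}. K0 i)"
    and tail: "\<forall>s\<le>N. (\<Sum>i\<in>{s..N}. K1 i) \<ge> (\<Sum>i\<in>{s..N}. K0 i)"
    and mon: "\<forall>i<N. g (Suc i) \<le> g i"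
  shows "(\<Sum>i\<in>{0..N}. K1 i * g i) \<le> (\<Sum>i\<in>{0..N}. K0 i * g i)"
proof -
  define h where "h i = K1 i - K0 i" for i
  have e: "(\<Sum>i\<in>{0..N}. K1 i * g i) - (\<Sum>i\<in>{0..N}. K0 i * g i) = (\<Sum>i\<le>N. h i * g i)"
    by (simp add: h_def atLeast0AtMost sum_subtractf[symmetric] algebra_simps)
  have P0: "(\<Sum>j\<le>N. h j) = 0" using tot by (simp add: h_def atLeast0AtMost sum_subtractf)
  have Pi: "(\<Sum>j\<le>i. h j) \<le> 0" if "i < N" for i
  proof -
    have sp: "{..N} = {..i} \<union> {Suc i..N}" using that by auto
    have "(\<Sum>j\<le>N. h j) = (\<Sum>j\<le>i. h j) + (\<Sum>j\<in>{Suc i..N}. h j)"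
      unfolding sp by (subst sum.union_disjoint) auto
    moreover have "(\<Sum>j\<in>{Suc i..N}. h j) \<ge> 0" using tail that
      by (simp add: h_def sum_subtractf)
    ultimately show ?thesis using P0 by simp
  qed
  have "(\<Sum>i<N. (\<Sum>j\<le>i. h j) * (g i - g (Suc i))) \<le> 0"
    by (rule sum_nonpos) (simp add: Pi mon mult_nonpos_nonneg)
  thus ?thesis using e abel[of h g N] P0 by simp
qed


lemma phi_le:
  fixes K :: "nat \<Rightarrow> nat \<Rightarrow> nat \<Rightarrow> real"
  assumes dP: "dP > 0" and v0: "v 0 = 0"
    and K_nonneg: "\<forall>t\<ge>1. \<forall>d\<le>N. \<forall>d'. K t d' d \<ge> 0"
    and K_support: "\<forall>t\<ge>1. \<forall>d\<le>N. \<forall>d'. d' > d \<longrightarrow> K t d' d = 0"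
    and K_sum: "\<forall>t\<ge>1. \<forall>d\<le>N. (\<Sum>d'\<in>{0..d}. K t d' d) = 1"
  shows "1 \<le> t \<Longrightarrow> d \<le> N \<Longrightarrow> (\<forall>u'\<le>u. fv v pinit dP (t-1) u' \<le> c)
     \<Longrightarrow> phi_aux v m N pinit dP K r t u d \<le> c"
proof (induction r arbitrary: t u d c)
  case 0
  have "0 \<le> c" using 0(3)[rule_format, of 0] v0 by (simp add: fv_def)
  thus ?case using 0 by (auto simp: fv_def)
next
  case (Suc r)
  have c0: "0 \<le> c" using Suc(4)[rule_format, of 0] v0 by (simp add: fv_def)
  show ?case
  proof (cases "u + d \<le> m")
    case True thus ?thesis using Suc(4) by (simp add: fv_def)
  next
    case False
    have "(\<Sum>d'\<in>{0..N}. K t d' d * phi_aux v m N pinit dP K r (t + 1) u' d') \<le> c"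
      if u': "u' \<le> u" for u'
    proof -
      have "(\<Sum>d'\<in>{0..N}. K t d' d * phi_aux v m N pinit dP K r (t + 1) u' d')
            \<le> (\<Sum>d'\<in>{0..N}. K t d' d * c)"
      proof (rule sum_mono)
        fix d' assume d': "d' \<in> {0..N}"
        have "fv v pinit dP (t + 1 - 1) w \<le> c" if "w \<le> u'" for w
        proof -
          have "price pinit dP (t-1) \<le> price pinit dP t" using price_mono[OF dP] by simp
          hence h1: "fv v pinit dP t w \<le> fv v pinit dP (t-1) w"
            by (simp add: fv_def mult_left_mono)
          have h2: "fv v pinit dP (t-1) w \<le> c" using Suc(4) that u' by simp
          show ?thesis using h1 h2 by simp
        qed
        hence "phi_aux v m N pinit dP K r (t + 1) u' d' \<le> c"
          using Suc.IH[of "t+1" d' u' c] d' by auto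
        thus "K t d' d * phi_aux v m N pinit dP K r (t + 1) u' d' \<le> K t d' d * c"
          using K_nonneg Suc(2,3) by (simp add: mult_left_mono)
      qed
      also have "\<dots> = c" using K_total[OF K_support K_sum Suc(2,3)]
        by (simp add: sum_distrib_right[symmetric])
      finally show ?thesis .
    qed
    thus ?thesis using False by (simp add: Max_le_iff)
  qed
qed


lemma phi_sigma:
  fixes K :: "nat \<Rightarrow> nat \<Rightarrow> nat \<Rightarrow> real"
  assumes dP: "dP > 0" and v0: "v 0 = 0"
    and K_nonneg: "\<forall>t\<ge>1. \<forall>d\<le>N. \<forall>d'. K t d' d \<ge> 0"
    and K_support: "\<forall>t\<ge>1. \<forall>d\<le>N. \<forall>d'. d' > d \<longrightarrow> K t d' d = 0"
    and K_sum: "\<forall>t\<ge>1. \<forall>d\<le>N. (\<Sum>d'\<in>{0..d}. K t d' d) = 1"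
  shows "1 \<le> t \<Longrightarrow> d \<le> N \<Longrightarrow> sigma v m pinit dP (t-1) \<le> u \<Longrightarrow> u \<le> m
     \<Longrightarrow> phi_aux v m N pinit dP K r t u d \<le> phi_aux v m N pinit dP K r t (sigma v m pinit dP (t-1)) d"
proof (induction r arbitrary: t u d)
  case 0
  let ?s = "sigma v m pinit dP (t-1)"
  have sp: "\<forall>w\<le>m. fv v pinit dP (t-1) w \<le> fv v pinit dP (t-1) ?s" using sigma_prop by blast
  have "0 \<le> fv v pinit dP (t-1) ?s" using sp[rule_format, of 0] v0 by (simp add: fv_def)
  thus ?case using 0 sp by (auto simp: fv_def)
next
  case (Suc r)
  let ?s = "sigma v m pinit dP (t-1)"
  have sp: "\<forall>w\<le>m. fv v pinit dP (t-1) w \<le> fv v pinit dP (t-1) ?s" using sigma_prop by blast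
  show ?case
  proof (cases "u + d \<le> m")
    case True
    hence "?s + d \<le> m" using Suc by simp
    thus ?thesis using True sp Suc by (simp add: fv_def)
  next
    case F1: False
    show ?thesis
    proof (cases "?s + d \<le> m")
      case True
      have "phi_aux v m N pinit dP K (Suc r) t u d \<le> fv v pinit dP (t-1) ?s"
        by (rule phi_le[where dP=dP and v=v and N=N and K=K, OF dP v0 K_nonneg K_support K_sum]) (use Suc sp in auto)
      thus ?thesis using True by (simp add: fv_def)
    next
      case F2: False
      let ?E = "\<lambda>u'. (\<Sum>d'\<in>{0..N}. K t d' d * phi_aux v m N pinit dP K r (t + 1) u' d')"
      have "?E u' \<le> Max (?E ` {0..?s})" if u': "u' \<le> u" for u'
      proof (cases "u' \<le> ?s")
        case True thus ?thesis by (intro Max_ge) auto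
      next
        case False
        let ?s' = "sigma v m pinit dP t"
        have s's: "?s' \<le> ?s" using sigma_mono[OF dP, of v m pinit "t-1"] Suc(2) by simp
        have "?E u' \<le> ?E ?s'"
        proof (rule sum_mono)
          fix d' assume d': "d' \<in> {0..N}"
          have "phi_aux v m N pinit dP K r (t + 1) u' d' \<le> phi_aux v m N pinit dP K r (t + 1) ?s' d'"
            using Suc.IH[of "t+1" d' u'] d' False s's u' Suc(5) by simp
          thus "K t d' d * phi_aux v m N pinit dP K r (t + 1) u' d' \<le> K t d' d * phi_aux v m N pinit dP K r (t + 1) ?s' d'"
            using K_nonneg Suc(2,3) by (simp add: mult_left_mono)
        qed
        also have "\<dots> \<le> Max (?E ` {0..?s})" using s's by (intro Max_ge) auto
        finally show ?thesis .
      qed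
      hence "Max (?E ` {0..u}) \<le> Max (?E ` {0..?s})" by (simp add: Max_le_iff)
      thus ?thesis using F1 F2 by simp
    qed
  qed
qed


lemma phi_mono:
  fixes K :: "nat \<Rightarrow> nat \<Rightarrow> nat \<Rightarrow> real"
  assumes dP: "dP > 0" and v0: "v 0 = 0"
    and v_concave: "\<forall>u. 0 < u \<and> u < m \<longrightarrow> v (Suc u) - v u \<le> v u - v (u - 1)"
    and K_nonneg: "\<forall>t\<ge>1. \<forall>d\<le>N. \<forall>d'. K t d' d \<ge> 0"
    and K_support: "\<forall>t\<ge>1. \<forall>d\<le>N. \<forall>d'. d' > d \<longrightarrow> K t d' d = 0"
    and K_sum: "\<forall>t\<ge>1. \<forall>d\<le>N. (\<Sum>d'\<in>{0..d}. K t d' d) = 1"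
    and SM: "\<forall>t\<in>{1..R - 1}. \<forall>s\<le>N. \<forall>d<N.
        (\<Sum>d'\<in>{s..N}. K t d' (Suc d)) \<ge> (\<Sum>d'\<in>{s..N}. K t d' d)"
  shows "1 \<le> t \<Longrightarrow> t + r = R \<Longrightarrow> k \<le> sigma v m pinit dP (t-1) \<Longrightarrow> d < N
     \<Longrightarrow> phi_aux v m N pinit dP K r t k (Suc d) \<le> phi_aux v m N pinit dP K r t k d"
proof (induction r arbitrary: t k d)
  case 0
  have "0 \<le> fv v pinit dP (t-1) k"
    using sigma_incr[OF v_concave, of 0 k pinit dP "t-1"] 0 v0 by (simp add: fv_def)
  thus ?case by (auto simp: fv_def)
next
  case (Suc r)
  show ?case
  proof (cases "k + Suc d \<le> m")
    case True thus ?thesis by simp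
  next
    case F1: False
    show ?thesis
    proof (cases "k + d \<le> m")
      case True
      have "phi_aux v m N pinit dP K (Suc r) t k (Suc d) \<le> fv v pinit dP (t-1) k"
        by (rule phi_le[where dP=dP and v=v and N=N and K=K, OF dP v0 K_nonneg K_support K_sum])
           (use Suc sigma_incr[OF v_concave] in auto)
      thus ?thesis using True by (simp add: fv_def)
    next
      case F2: False
      let ?E1 = "\<lambda>u'. (\<Sum>d'\<in>{0..N}. K t d' (Suc d) * phi_aux v m N pinit dP K r (t + 1) u' d')"
      let ?E0 = "\<lambda>u'. (\<Sum>d'\<in>{0..N}. K t d' d * phi_aux v m N pinit dP K r (t + 1) u' d')"
      have smu: "?E1 u' \<le> ?E0 u'" if "u' \<le> sigma v m pinit dP t" for u'
      proof (rule sm_sum)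
        show "(\<Sum>i = 0..N. K t i (Suc d)) = (\<Sum>i = 0..N. K t i d)"
          using K_total[OF K_support K_sum, of t "Suc d"] K_total[OF K_support K_sum, of t d] Suc(2,5)
          by simp
        show "\<forall>s\<le>N. (\<Sum>i = s..N. K t i d) \<le> (\<Sum>i = s..N. K t i (Suc d))"
          using SM Suc(2,3,5) by auto
        show "\<forall>i<N. phi_aux v m N pinit dP K r (t + 1) u' (Suc i) \<le> phi_aux v m N pinit dP K r (t + 1) u' i"
          using Suc.IH[of "t+1" u'] Suc(3) that by simp
      qed
      have "?E1 u' \<le> Max (?E0 ` {0..k})" if u': "u' \<le> k" for u'
      proof (cases "u' \<le> sigma v m pinit dP t")
        case True
        have "?E0 u' \<le> Max (?E0 ` {0..k})" using u' by (intro Max_ge) auto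
        thus ?thesis using smu[OF True] by simp
      next
        case False
        let ?s' = "sigma v m pinit dP t"
        have s's: "?s' \<le> sigma v m pinit dP (t-1)" using sigma_mono[OF dP, of v m pinit "t-1"] Suc(2) by simp
        have km: "k \<le> m" using Suc(4) sigma_prop[of v m pinit dP "t-1"] by simp
        have "?E1 u' \<le> ?E1 ?s'"
        proof (rule sum_mono)
          fix d' assume d': "d' \<in> {0..N}"
          have "phi_aux v m N pinit dP K r (t + 1) u' d' \<le> phi_aux v m N pinit dP K r (t + 1) ?s' d'"
            using phi_sigma[where dP=dP and v=v and N=N and K=K, OF dP v0 K_nonneg K_support K_sum,
                where m=m and pinit=pinit and t="t+1" and d=d' and u=u' and r=r] d' False u' km by simp
          thus "K t d' (Suc d) * phi_aux v m N pinit dP K r (t + 1) u' d' \<le> K t d' (Suc d) * phi_aux v m N pinit dP K r (t + 1) ?s' d'"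
            using K_nonneg Suc(2,5) by (simp add: mult_left_mono)
        qed
        also have "\<dots> \<le> ?E0 ?s'" using smu by simp
        also have "\<dots> \<le> Max (?E0 ` {0..k})" using False u' by (intro Max_ge) auto
        finally show ?thesis .
      qed
      hence "Max (?E1 ` {0..k}) \<le> Max (?E0 ` {0..k})" by (simp add: Max_le_iff)
      thus ?thesis using F1 F2 by simp
    qed
  qed
qed


theorem mainTheorem11:
  fixes n m N :: nat and pinit dP :: real and v :: "nat \<Rightarrow> real"
    and M :: "'a measure" and Z :: "nat \<Rightarrow> 'a \<Rightarrow> real"
    and K :: "nat \<Rightarrow> nat \<Rightarrow> nat \<Rightarrow> real"
  assumes n_ge: "n \<ge> 2" and m_ge: "m \<ge> 1" and N_def: "N = (n - 1) * m"
    and pinit_nonneg: "pinit \<ge> 0" and dP_pos: "dP > 0"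
    and v0: "v 0 = 0"
    and v_nonneg: "\<forall>u\<le>m. v u \<ge> 0"
    and v_mono: "\<forall>u<m. v u \<le> v (Suc u)"
    and v_concave: "\<forall>u. 0 < u \<and> u < m \<longrightarrow> v (Suc u) - v u \<le> v u - v (u - 1)"
    and Rbar_ge: "\<lceil>(v 1 - pinit) / dP\<rceil> \<ge> 1"
    and M_prob: "prob_space M"
    and Z_meas: "\<forall>j\<in>{1..N}. Z j \<in> borel_measurable M"
    and Z_order: "AE \<omega> in M. (\<forall>j\<in>{1..<N}. Z (Suc j) \<omega> \<le> Z j \<omega>) \<and> (\<forall>j\<in>{1..N}. Z j \<omega> \<ge> 0)"
    and K_nonneg: "\<forall>t\<ge>1. \<forall>d\<le>N. \<forall>d'. K t d' d \<ge> 0"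
    and K_support: "\<forall>t\<ge>1. \<forall>d\<le>N. \<forall>d'. d' > d \<longrightarrow> K t d' d = 0"
    and K_sum: "\<forall>t\<ge>1. \<forall>d\<le>N. (\<Sum>d'\<in>{0..d}. K t d' d) = 1"
    and K_cond: "\<forall>t\<ge>1. \<forall>d\<le>N. \<forall>d'\<le>N.
        measure M {\<omega>\<in>space M. demand Z N (price pinit dP (t - 1)) \<omega> = d} > 0 \<longrightarrow>
        K t d' d =
          measure M {\<omega>\<in>space M. demand Z N (price pinit dP t) \<omega> = d'
                                 \<and> demand Z N (price pinit dP (t - 1)) \<omega> = d}
          / measure M {\<omega>\<in>space M. demand Z N (price pinit dP (t - 1)) \<omega> = d}"
    and SM: "\<forall>t\<in>{1..Rbar v pinit dP - 1}. \<forall>s\<le>N. \<forall>d<N.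
        (\<Sum>d'\<in>{s..N}. K t d' (Suc d)) \<ge> (\<Sum>d'\<in>{s..N}. K t d' d)"
  shows "\<forall>t\<in>{1..Rbar v pinit dP}. \<forall>k\<le>sigma v m pinit dP (t - 1). \<forall>d<N.
           phi v m N pinit dP K t k d \<ge> phi v m N pinit dP K t k (Suc d)"
  proof (intro ballI allI impI)
  fix t k d assume t: "t \<in> {1..Rbar v pinit dP}" and k: "k \<le> sigma v m pinit dP (t - 1)" and d: "d < N"
  show "phi v m N pinit dP K t k d \<ge> phi v m N pinit dP K t k (Suc d)"
    unfolding phi_def
    by (rule phi_mono[where dP=dP and v=v and N=N and K=K and m=m, OF dP_pos v0 v_concave K_nonneg K_support K_sum SM])
       (use t k d in auto)
qed

end
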